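(* Under Assumptions 1 and 2, for the accurate-gradient algorithm and every $t\in\{1,\dots,T\}$, $$-\eta_t\sum_{i=1}^n\big(g_i^t(x_i(t))\big)^Ty_i(t)\le\frac12\sum_{i=1}^n\big(\|y_i(t)\|^2-\|y_i(t+1)\|^2\big)+\eta_t^2(n\kappa_2^2+n^2\kappa_2^2)+\frac92\sum_{i=1}^n\|y_i(t)-\bar y(t)\|^2+2\eta_t(\kappa_2+\sqrt n\kappa_2)\sum_{i=1}^n\|y_i(t)-\bar y(t)\|,$$ where $\bar y(t)=\frac1n\sum_iy_i(t)$.
   Context: Network: Let $n\ge2$, $\mathcal V=\{1,\dots,n\}$. For $t=0,1,2,\dots$, $\mathcal G(t)=(\mathcal V,\mathcal E(t),A(t))$ is a digraph with weight matrix $A(t)=(a_{ij}(t))_{n\times n}$, where for some $\gamma>0$, $\gamma\le a_{ij}(t)\le1$ if $(j,i)\in\mathcal E(t)$ and $a_{ij}(t)=0$ otherwise; $\mathcal N_i(t)=\{j:(j,i)\in\mathcal E(t)\}$ and $i\in\mathcal N_i(t)$. Assumption 1: there is an integer $U>0$ such that for every $t\ge0$ the digraph $(\mathcal V,\bigcup_{k=tU}^{(t+1)U-1}\mathcal E(k))$ is strongly connected, and $A(t)1_n=A(t)^T1_n=1_n$ for all $t$. Problem: $\Omega\subset\mathbb R^m$ is convex; for each $i\in\mathcal V$ and $t\ge0$, $f_i^t:\Omega\times\Omega\to\mathbb R$ and $g_i^t=(g_{i1}^t,\dots,g_{ih}^t)^T:\Omega\to\mathbb R^h$; $\mathcal X^t=\{x\in\Omega:\sum_ig_i^t(x)\le0\}$;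 $\nabla_2$ is the gradient in the second argument; $\nabla g_i^t(x)=[\nabla g_{i1}^t(x),\dots,\nabla g_{ih}^t(x)]\in\mathbb R^{m\times h}$. Assumption 2: (i) $f_i^t(x,\cdot)$ convex, each $g_{ik}^t$ convex (differentiable); (ii) $\mathcal X^t\neq\emptyset$, $\Omega$ compact with $\|x\|\le\kappa$ on $\Omega$; (iii) $\|\nabla_2f_i^t(x,y)\|\le\kappa_1$, $\|g_i^t(x)\|\le\kappa_2$, $\|\nabla g_{ik}^t(x)\|\le\kappa_3$ on $\Omega$. Algorithm: $\phi:\mathbb R^m\to\mathbb R$ differentiable and $\mu$-strongly convex, $\mathcal D_\phi(x,y)=\phi(x)-\phi(y)-\langle\nabla\phi(y),x-y\rangle$. Non-increasing step sizes $\zeta_t,\eta_t\in(0,1]$ with $\zeta_t\le\eta_t$; $x_i(0)\in\Omega$, $y_i(0)=0\in\mathbb R^h$; for $t\ge0$: $z_i(t)=\sum_{j\in\mathcal N_i(t)}a_{ij}(t)x_j(t)$; $x_i(t+1)=\arg\min_{x\in\Omega}\{\mathcal D_\phi(x,z_i(t))+\langle\zeta_t\nabla_2f_i^t(x_i(t),x_i(t))+\eta_t\nabla g_i^t(x_i(t))y_i(t),x\rangle\}$; $y_i(t+1)=[(1-\eta_t)\sum_{j\in\mathcal N_i(t)}a_{ij}(t)y_j(t)+\eta_tg_i^t(x_i(t))]_+$. $T$ is the time horizon. *)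

theory Defs
  imports "HOL-Analysis.Analysis"
begin

definition pos_part :: "real^'h \<Rightarrow> real^'h" where
  "pos_part v = (\<chi> k. max 0 (v $ k))"

definition strongly_convex :: "real \<Rightarrow> (real^'m \<Rightarrow> real) \<Rightarrow> bool" where
  "strongly_convex \<mu> \<phi> \<longleftrightarrow> \<mu> > 0 \<and> convex_on UNIV (\<lambda>x. \<phi> x - \<mu> / 2 * (norm x)^2)"

definition bregman :: "(real^'m \<Rightarrow> real) \<Rightarrow> (real^'m \<Rightarrow> real^'m) \<Rightarrow> real^'m \<Rightarrow> real^'m \<Rightarrow> real" where
  "bregman \<phi> d\<phi> x y = \<phi> x - \<phi> y - d\<phi> y \<bullet> (x - y)"

text \<open>Digraph on vertex set V with edge set E (edge (j,i) means j -> i) is strongly connected.\<close>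
definition strongly_connected_on :: "nat set \<Rightarrow> (nat \<times> nat) set \<Rightarrow> bool" where
  "strongly_connected_on V E \<longleftrightarrow> (\<forall>i\<in>V. \<forall>j\<in>V. (i, j) \<in> (E \<inter> (V \<times> V))\<^sup>*)"

definition nbrs :: "nat \<Rightarrow> (nat \<Rightarrow> (nat \<times> nat) set) \<Rightarrow> nat \<Rightarrow> nat \<Rightarrow> nat set" where
  "nbrs n E t i = {j \<in> {1..n}. (j, i) \<in> E t}"

end

theory Submission
  imports Defs
begin

lemma pos_part_norm_le: "norm (pos_part v) \<le> norm (v::real^'h)"
  unfolding pos_part_def by (rule norm_le_componentwise_cart) auto

lemma alg_step:
  fixes w g :: "'a::real_inner"
  assumes "0 \<le> e" "e \<le> 1"
  shows "(norm ((1 - e) *\<^sub>R w + e *\<^sub>R g))^2 \<le> (norm w)^2 + 2 * e * (w \<bullet> g) + 2 * e^2 * (norm g)^2"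
proof -
  have ww: "w \<bullet> w \<ge> 0" by simp
  have s: "0 \<le> (norm (w + g))^2" by simp
  hence s': "0 \<le> w \<bullet> w + 2 * (w \<bullet> g) + g \<bullet> g"
    by (simp add: power2_norm_eq_inner inner_add inner_commute)
  have "(norm ((1 - e) *\<^sub>R w + e *\<^sub>R g))^2 = (1-e)^2 * (w \<bullet> w) + 2*e*(1-e)*(w \<bullet> g) + e^2 * (g \<bullet> g)"
    unfolding power2_norm_eq_inner
    by (simp add: inner_add_left inner_add_right inner_commute power2_eq_square algebra_simps)
  moreover have "(norm w)^2 + 2 * e * (w \<bullet> g) + 2 * e^2 * (norm g)^2 = (w \<bullet> w) + 2*e*(w \<bullet> g) + 2*e^2*(g \<bullet> g)"
    by (simp add: power2_norm_eq_inner)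
  moreover have "e^2 * (w \<bullet> w + 2 * (w \<bullet> g) + g \<bullet> g) \<ge> 0" using s' by simp
  moreover have "2*e*(1-e)*(w \<bullet> w) \<ge> 0" using assms ww by simp
  ultimately show ?thesis by (simp add: power2_eq_square algebra_simps)
qed

lemma fin_arith:
  fixes A B P K M Q X R :: real
  assumes "B \<le> A + 2*P + 4*K + 2*M" "0 \<le> Q" "0 \<le> X" "0 \<le> R"
  shows "- P \<le> 1/2 * (A - B) + (M + Q) + X + 2 * (K + R)"
  using assms by argo

lemma jensen_norm2:
  fixes Y :: "'b \<Rightarrow> 'a::real_normed_vector"
  assumes "finite S" "S \<noteq> {}" "(\<Sum>j\<in>S. a j) = 1" "\<And>j. j \<in> S \<Longrightarrow> a j \<ge> 0"
  shows "(norm (\<Sum>j\<in>S. a j *\<^sub>R Y j))^2 \<le> (\<Sum>j\<in>S. a j * (norm (Y j))^2)"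
proof -
  have "norm (\<Sum>j\<in>S. a j *\<^sub>R Y j) \<le> (\<Sum>j\<in>S. norm (a j *\<^sub>R Y j))" by (rule norm_sum)
  also have "\<dots> = (\<Sum>j\<in>S. a j * norm (Y j))" using assms(4) by (intro sum.cong) auto
  finally have "(norm (\<Sum>j\<in>S. a j *\<^sub>R Y j))^2 \<le> (\<Sum>j\<in>S. a j * norm (Y j))^2"
    by (intro power_mono) auto
  also have "\<dots> \<le> (\<Sum>j\<in>S. a j * (norm (Y j))^2)"
    using convex_on_sum[OF assms(1,2) convex_power_even[of 2] assms(3), of "\<lambda>j. norm (Y j)"] assms(4)
    by simp
  finally show ?thesis .
qed

theorem lemma6:
  fixes n :: nat and T :: nat and t :: nat
    and E :: "nat \<Rightarrow> (nat \<times> nat) set" and a :: "nat \<Rightarrow> nat \<Rightarrow> nat \<Rightarrow> real"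
    and \<gamma> :: real and U :: nat
    and \<Omega> :: "(real^'m) set"
    and f :: "nat \<Rightarrow> nat \<Rightarrow> real^'m \<Rightarrow> real^'m \<Rightarrow> real"
    and df :: "nat \<Rightarrow> nat \<Rightarrow> real^'m \<Rightarrow> real^'m \<Rightarrow> real^'m"
    and g :: "nat \<Rightarrow> nat \<Rightarrow> real^'m \<Rightarrow> real^'h"
    and Dg :: "nat \<Rightarrow> nat \<Rightarrow> real^'m \<Rightarrow> real^'h^'m"
    and \<kappa> \<kappa>1 \<kappa>2 \<kappa>3 :: real
    and \<phi> :: "real^'m \<Rightarrow> real" and d\<phi> :: "real^'m \<Rightarrow> real^'m" and \<mu> :: real
    and \<zeta> \<eta> :: "nat \<Rightarrow> real"
    and x :: "nat \<Rightarrow> nat \<Rightarrow> real^'m" and y :: "nat \<Rightarrow> nat \<Rightarrow> real^'h"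
  assumes n2: "n \<ge> 2"
    \<comment> \<open>network: edges within V, weights, self-loops\<close>
    and E_sub: "\<And>t. E t \<subseteq> {1..n} \<times> {1..n}"
    and gamma_pos: "\<gamma> > 0"
    and a_edge: "\<And>t i j. (j, i) \<in> E t \<Longrightarrow> \<gamma> \<le> a t i j \<and> a t i j \<le> 1"
    and a_nonedge: "\<And>t i j. i \<in> {1..n} \<Longrightarrow> j \<in> {1..n} \<Longrightarrow> (j, i) \<notin> E t \<Longrightarrow> a t i j = 0"
    and self_loop: "\<And>t i. i \<in> {1..n} \<Longrightarrow> (i, i) \<in> E t"
    \<comment> \<open>Assumption 1\<close>
    and U_pos: "U > 0"
    and joint_sc: "\<And>t. strongly_connected_on {1..n} (\<Union>k\<in>{t*U..<(t+1)*U}. E k)"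
    and row_stoch: "\<And>t i. i \<in> {1..n} \<Longrightarrow> (\<Sum>j=1..n. a t i j) = 1"
    and col_stoch: "\<And>t j. j \<in> {1..n} \<Longrightarrow> (\<Sum>i=1..n. a t i j) = 1"
    \<comment> \<open>Assumption 2\<close>
    and Omega_convex: "convex \<Omega>"
    and Omega_compact: "compact \<Omega>"
    and f_grad: "\<And>i t u v. i \<in> {1..n} \<Longrightarrow> u \<in> \<Omega> \<Longrightarrow> v \<in> \<Omega> \<Longrightarrow>
                   (f i t u has_derivative (\<lambda>w. df i t u v \<bullet> w)) (at v)"
    and f_convex: "\<And>i t u. i \<in> {1..n} \<Longrightarrow> u \<in> \<Omega> \<Longrightarrow> convex_on \<Omega> (f i t u)"
    and g_grad: "\<And>i t k v. i \<in> {1..n} \<Longrightarrow> v \<in> \<Omega> \<Longrightarrow>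
                   ((\<lambda>z. g i t z $ k) has_derivative (\<lambda>w. column k (Dg i t v) \<bullet> w)) (at v)"
    and g_convex: "\<And>i t k. i \<in> {1..n} \<Longrightarrow> convex_on \<Omega> (\<lambda>z. g i t z $ k)"
    and X_nonempty: "\<And>t. {z \<in> \<Omega>. \<forall>k. (\<Sum>i=1..n. g i t z $ k) \<le> 0} \<noteq> {}"
    and kappa_bd: "\<And>z. z \<in> \<Omega> \<Longrightarrow> norm z \<le> \<kappa>"
    and kappa1_bd: "\<And>i t u v. i \<in> {1..n} \<Longrightarrow> u \<in> \<Omega> \<Longrightarrow> v \<in> \<Omega> \<Longrightarrow> norm (df i t u v) \<le> \<kappa>1"
    and kappa2_bd: "\<And>i t z. i \<in> {1..n} \<Longrightarrow> z \<in> \<Omega> \<Longrightarrow> norm (g i t z) \<le> \<kappa>2"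
    and kappa3_bd: "\<And>i t k z. i \<in> {1..n} \<Longrightarrow> z \<in> \<Omega> \<Longrightarrow> norm (column k (Dg i t z)) \<le> \<kappa>3"
    \<comment> \<open>mirror map\<close>
    and phi_grad: "\<And>z. (\<phi> has_derivative (\<lambda>w. d\<phi> z \<bullet> w)) (at z)"
    and phi_sc: "strongly_convex \<mu> \<phi>"
    \<comment> \<open>step sizes\<close>
    and zeta_range: "\<And>t. 0 < \<zeta> t \<and> \<zeta> t \<le> 1"
    and eta_range: "\<And>t. 0 < \<eta> t \<and> \<eta> t \<le> 1"
    and zeta_mono: "\<And>s t. s \<le> t \<Longrightarrow> \<zeta> t \<le> \<zeta> s"
    and eta_mono: "\<And>s t. s \<le> t \<Longrightarrow> \<eta> t \<le> \<eta> s"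
    and zeta_le_eta: "\<And>t. \<zeta> t \<le> \<eta> t"
    \<comment> \<open>algorithm\<close>
    and x_init: "\<And>i. i \<in> {1..n} \<Longrightarrow> x i 0 \<in> \<Omega>"
    and y_init: "\<And>i. i \<in> {1..n} \<Longrightarrow> y i 0 = 0"
    and x_update: "\<And>i s. i \<in> {1..n} \<Longrightarrow>
        (let z = (\<Sum>j\<in>nbrs n E s i. a s i j *\<^sub>R x j s);
             c = \<zeta> s *\<^sub>R df i s (x i s) (x i s) + \<eta> s *\<^sub>R (Dg i s (x i s) *v y i s);
             obj = (\<lambda>w. bregman \<phi> d\<phi> w z + c \<bullet> w)
         in x i (Suc s) \<in> \<Omega> \<and> (\<forall>w\<in>\<Omega>. obj (x i (Suc s)) \<le> obj w))"
    and y_update: "\<And>i s. i \<in> {1..n} \<Longrightarrow>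
        y i (Suc s) = pos_part ((1 - \<eta> s) *\<^sub>R (\<Sum>j\<in>nbrs n E s i. a s i j *\<^sub>R y j s)
                               + \<eta> s *\<^sub>R g i s (x i s))"
    and t_range: "1 \<le> t" "t \<le> T"
  shows "- \<eta> t * (\<Sum>i=1..n. g i t (x i t) \<bullet> y i t)
     \<le> 1/2 * (\<Sum>i=1..n. (norm (y i t))^2 - (norm (y i (t+1)))^2)
       + (\<eta> t)^2 * (real n * \<kappa>2^2 + (real n)^2 * \<kappa>2^2)
       + 9/2 * (\<Sum>i=1..n. (norm (y i t - (1 / real n) *\<^sub>R (\<Sum>j=1..n. y j t)))^2)
       + 2 * \<eta> t * (\<kappa>2 + sqrt (real n) * \<kappa>2)
           * (\<Sum>i=1..n. norm (y i t - (1 / real n) *\<^sub>R (\<Sum>j=1..n. y j t)))"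
proof -
  define N where "N = {1..n}"
  define e where "e = \<eta> t"
  define Y where "Y i = y i t" for i
  define G where "G i = g i t (x i t)" for i
  define w where "w i = (\<Sum>j\<in>N. a t i j *\<^sub>R Y j)" for i
  define c where "c = (1 / real n) *\<^sub>R (\<Sum>j=1..n. y j t)"
  define S where "S = (\<Sum>i=1..n. norm (y i t - c))"
  have finN: "finite N" and neN: "N \<noteq> {}" using n2 by (auto simp: N_def)
  have e0: "0 < e" "e \<le> 1" using eta_range[of t] by (auto simp: e_def)
  have a_nn: "a t i j \<ge> 0" if "i \<in> N" "j \<in> N" for i j
    using a_edge[of j i t] a_nonedge[of i j t] gamma_pos that by (cases "(j,i) \<in> E t") (auto simp: N_def)
  obtain s where ts: "t = Suc s" using t_range by (cases t) auto
  have xO: "x i t \<in> \<Omega>" if "i \<in> N" for i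
    using x_update[of i s] that by (auto simp: ts Let_def N_def)
  have Gb: "norm (G i) \<le> \<kappa>2" if "i \<in> N" for i
    using kappa2_bd[of i "x i t" t] xO[OF that] that by (auto simp: G_def N_def)
  have k2: "\<kappa>2 \<ge> 0" using order_trans[OF norm_ge_zero Gb[of 1]] n2 by (auto simp: N_def)
  have nb: "(\<Sum>j\<in>nbrs n E t i. a t i j *\<^sub>R y j t) = w i" if "i \<in> N" for i
    unfolding w_def Y_def
  proof (rule sum.mono_neutral_left)
    show "finite N" by (rule finN)
    show "nbrs n E t i \<subseteq> N" by (auto simp: nbrs_def N_def)
    show "\<forall>j\<in>N - nbrs n E t i. a t i j *\<^sub>R y j t = 0"
      using a_nonedge that by (auto simp: nbrs_def N_def)
  qed
  have step: "(norm (y i (t+1)))^2 \<le> (norm (w i))^2 + 2 * e * (w i \<bullet> G i) + 2 * e^2 * \<kappa>2^2"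
    if "i \<in> N" for i
  proof -
    have "y i (t+1) = pos_part ((1 - e) *\<^sub>R w i + e *\<^sub>R G i)"
      using y_update[of i t] nb[OF that] that by (simp add: N_def e_def G_def)
    hence "(norm (y i (t+1)))^2 \<le> (norm ((1 - e) *\<^sub>R w i + e *\<^sub>R G i))^2"
      using pos_part_norm_le by (simp add: power_mono)
    also have "\<dots> \<le> (norm (w i))^2 + 2 * e * (w i \<bullet> G i) + 2 * e^2 * (norm (G i))^2"
      using e0 by (intro alg_step) auto
    also have "\<dots> \<le> (norm (w i))^2 + 2 * e * (w i \<bullet> G i) + 2 * e^2 * \<kappa>2^2"
      using Gb[OF that] e0 by (simp add: power_mono)
    finally show ?thesis .
  qed
  have jen: "(\<Sum>i\<in>N. (norm (w i))^2) \<le> (\<Sum>i\<in>N. (norm (Y i))^2)"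
  proof -
    have "(\<Sum>i\<in>N. (norm (w i))^2) \<le> (\<Sum>i\<in>N. \<Sum>j\<in>N. a t i j * (norm (Y j))^2)"
      unfolding w_def
      by (intro sum_mono jensen_norm2[OF finN neN]) (use row_stoch a_nn in \<open>auto simp: N_def\<close>)
    also have "\<dots> = (\<Sum>j\<in>N. (\<Sum>i\<in>N. a t i j) * (norm (Y j))^2)"
      by (subst sum.swap) (simp add: sum_distrib_right)
    also have "\<dots> = (\<Sum>j\<in>N. (norm (Y j))^2)"
      using col_stoch by (intro sum.cong) (auto simp: N_def)
    finally show ?thesis .
  qed
  have cross: "(\<Sum>i\<in>N. (w i - Y i) \<bullet> G i) \<le> 2 * \<kappa>2 * S"
  proof -
    have "(w i - Y i) \<bullet> G i \<le> \<kappa>2 * ((\<Sum>j\<in>N. a t i j * norm (Y j - c)) + norm (Y i - c))"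
      if i: "i \<in> N" for i
    proof -
      have "w i - Y i = (\<Sum>j\<in>N. a t i j *\<^sub>R (Y j - c)) - (Y i - c)"
      proof -
        have rs: "(\<Sum>j\<in>N. a t i j) = 1" using row_stoch[of i t] i by (simp add: N_def)
        have "(\<Sum>j\<in>N. a t i j *\<^sub>R (Y j - c)) = (\<Sum>j\<in>N. a t i j *\<^sub>R Y j) - (\<Sum>j\<in>N. a t i j *\<^sub>R c)"
          by (simp only: scaleR_diff_right sum_subtractf)
        also have "(\<Sum>j\<in>N. a t i j *\<^sub>R c) = c"
          by (simp only: scaleR_sum_left[symmetric] rs scaleR_one)
        finally show ?thesis by (simp add: w_def)
      qed
      hence nb1: "norm (w i - Y i) \<le> (\<Sum>j\<in>N. a t i j * norm (Y j - c)) + norm (Y i - c)"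
      proof -
        assume h: "w i - Y i = (\<Sum>j\<in>N. a t i j *\<^sub>R (Y j - c)) - (Y i - c)"
        have "norm (\<Sum>j\<in>N. a t i j *\<^sub>R (Y j - c)) \<le> (\<Sum>j\<in>N. norm (a t i j *\<^sub>R (Y j - c)))"
          by (rule norm_sum)
        also have "\<dots> = (\<Sum>j\<in>N. a t i j * norm (Y j - c))"
          using a_nn i by (intro sum.cong) auto
        finally have "norm (\<Sum>j\<in>N. a t i j *\<^sub>R (Y j - c)) \<le> (\<Sum>j\<in>N. a t i j * norm (Y j - c))" .
        moreover have "norm ((\<Sum>j\<in>N. a t i j *\<^sub>R (Y j - c)) - (Y i - c)) \<le> norm (\<Sum>j\<in>N. a t i j *\<^sub>R (Y j - c)) + norm (Y i - c)"
          by (rule norm_triangle_ineq4)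
        ultimately show ?thesis unfolding h by linarith
      qed
      moreover have "(w i - Y i) \<bullet> G i \<le> norm (w i - Y i) * norm (G i)"
        by (metis Cauchy_Schwarz_ineq2 abs_le_iff)
      moreover have "norm (w i - Y i) * norm (G i) \<le> \<kappa>2 * norm (w i - Y i)"
        using mult_right_mono[OF Gb[OF i] norm_ge_zero[of "w i - Y i"]] by (simp add: mult.commute)
      moreover have "\<kappa>2 * norm (w i - Y i) \<le> \<kappa>2 * ((\<Sum>j\<in>N. a t i j * norm (Y j - c)) + norm (Y i - c))"
        using nb1 k2 by (rule mult_left_mono)
      ultimately show ?thesis by linarith
    qed
    hence "(\<Sum>i\<in>N. (w i - Y i) \<bullet> G i) \<le> (\<Sum>i\<in>N. \<kappa>2 * ((\<Sum>j\<in>N. a t i j * norm (Y j - c)) + norm (Y i - c)))"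
      by (rule sum_mono)
    also have "\<dots> = \<kappa>2 * ((\<Sum>j\<in>N. (\<Sum>i\<in>N. a t i j) * norm (Y j - c)) + (\<Sum>i\<in>N. norm (Y i - c)))"
    proof -
      have "(\<Sum>i\<in>N. \<Sum>j\<in>N. a t i j * norm (Y j - c)) = (\<Sum>j\<in>N. \<Sum>i\<in>N. a t i j * norm (Y j - c))"
        by (rule sum.swap)
      also have "\<dots> = (\<Sum>j\<in>N. (\<Sum>i\<in>N. a t i j) * norm (Y j - c))"
        by (simp add: sum_distrib_right)
      finally have sw: "(\<Sum>i\<in>N. \<Sum>j\<in>N. a t i j * norm (Y j - c)) = (\<Sum>j\<in>N. (\<Sum>i\<in>N. a t i j) * norm (Y j - c))" .
      show ?thesis by (simp only: sum_distrib_left[symmetric] sum.distrib sw)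
    qed
    also have "\<dots> = \<kappa>2 * (2 * S)"
      using col_stoch by (simp add: S_def N_def Y_def)
    finally show ?thesis by simp
  qed
  have main: "(\<Sum>i\<in>N. (norm (y i (t+1)))^2) \<le> (\<Sum>i\<in>N. (norm (Y i))^2) + 2 * e * (\<Sum>i\<in>N. G i \<bullet> Y i)
      + 4 * e * \<kappa>2 * S + 2 * e^2 * real n * \<kappa>2^2"
  proof -
    have "(\<Sum>i\<in>N. (norm (y i (t+1)))^2) \<le> (\<Sum>i\<in>N. (norm (w i))^2 + 2 * e * (w i \<bullet> G i) + 2 * e^2 * \<kappa>2^2)"
      by (rule sum_mono) (rule step)
    also have "\<dots> = (\<Sum>i\<in>N. (norm (w i))^2) + 2 * e * (\<Sum>i\<in>N. (w i - Y i) \<bullet> G i) + 2 * e * (\<Sum>i\<in>N. G i \<bullet> Y i) + 2 * e^2 * real n * \<kappa>2^2"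
    proof -
      have wg: "w i \<bullet> G i = (w i - Y i) \<bullet> G i + G i \<bullet> Y i" for i
        by (simp add: inner_diff_left inner_commute[of "G i" "Y i"])
      have cN: "card N = n" by (simp add: N_def)
      show ?thesis
        by (simp only: sum.distrib wg sum_distrib_left[symmetric] sum_constant cN) (simp add: algebra_simps)
    qed
    also have "\<dots> \<le> (\<Sum>i\<in>N. (norm (Y i))^2) + 2 * e * (2 * \<kappa>2 * S) + 2 * e * (\<Sum>i\<in>N. G i \<bullet> Y i) + 2 * e^2 * real n * \<kappa>2^2"
      using jen cross e0 by (intro add_mono mult_left_mono order_refl) auto
    finally show ?thesis by simp
  qed
  have S0: "S \<ge> 0" unfolding S_def by (intro sum_nonneg) auto
  have extra1: "0 \<le> e^2 * (real n)^2 * \<kappa>2^2" by simp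
  have extra2: "0 \<le> 9/2 * (\<Sum>i=1..n. (norm (y i t - c))^2)" by (intro mult_nonneg_nonneg sum_nonneg) auto
  have extra3: "0 \<le> e * (sqrt (real n) * \<kappa>2) * S" using e0 k2 S0 by simp
  define P where "P = (\<Sum>i\<in>N. G i \<bullet> Y i)"
  define A where "A = (\<Sum>i\<in>N. (norm (Y i))^2)"
  define B where "B = (\<Sum>i\<in>N. (norm (y i (t+1)))^2)"
  define K where "K = e * \<kappa>2 * S"
  define M where "M = e^2 * real n * \<kappa>2^2"
  define Q where "Q = e^2 * (real n)^2 * \<kappa>2^2"
  define X where "X = 9/2 * (\<Sum>i=1..n. (norm (y i t - c))^2)"
  define R where "R = e * (sqrt (real n) * \<kappa>2) * S"
  have H: "- (e * P) \<le> 1/2 * (A - B) + (M + Q) + X + 2 * (K + R)"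
  proof (rule fin_arith)
    show "B \<le> A + 2 * (e * P) + 4 * K + 2 * M" using main by (simp add: A_def B_def P_def K_def M_def mult.assoc)
    show "0 \<le> Q" using extra1 by (simp add: Q_def)
    show "0 \<le> X" using extra2 by (simp add: X_def)
    show "0 \<le> R" using extra3 by (simp add: R_def)
  qed
  have q1: "- \<eta> t * (\<Sum>i=1..n. g i t (x i t) \<bullet> y i t) = - (e * P)"
    by (simp add: P_def N_def G_def Y_def e_def)
  have q2: "1/2 * (\<Sum>i=1..n. (norm (y i t))^2 - (norm (y i (t+1)))^2) = 1/2 * (A - B)"
    by (simp add: sum_subtractf N_def Y_def A_def B_def)
  have q3: "(\<eta> t)^2 * (real n * \<kappa>2^2 + (real n)^2 * \<kappa>2^2) = M + Q"
    by (simp add: M_def Q_def e_def algebra_simps)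
  have q4: "9/2 * (\<Sum>i=1..n. (norm (y i t - (1 / real n) *\<^sub>R (\<Sum>j=1..n. y j t)))^2) = X"
    by (simp add: X_def c_def)
  have q5: "2 * \<eta> t * (\<kappa>2 + sqrt (real n) * \<kappa>2)
           * (\<Sum>i=1..n. norm (y i t - (1 / real n) *\<^sub>R (\<Sum>j=1..n. y j t))) = 2 * (K + R)"
    by (simp add: K_def R_def S_def c_def e_def algebra_simps)
  show ?thesis unfolding q1 q2 q3 q4 q5 by (rule H)
qed

end
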